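(* For every $\alpha>0$ there exist a constant $c_0>0$ and infinitely many positive integers $n$ such that for each of them there is a real polynomial $P_n$ of degree $n$ satisfying: (1) $|P_n(x)|\le 1$ for $|x|\le1$, and $P_n(1)=P_n(-1)=1$; (2) $|P_n(x)|\le n^{-6}$ for $|x|\le 1-n^{-(2-\alpha)}$; (3) $P_n(x)\ge c_0$ for $1-n^{-2}\le|x|\le1$. *)

theory Defs
  imports "HOL-Computational_Algebra.Polynomial"
begin

end

theory Submission
  imports Defs "HOL-Library.Infinite_Set" "HOL-Real_Asymp.Real_Asymp"
begin

fun cheb :: "nat \<Rightarrow> real poly" where
  "cheb 0 = 1"
| "cheb (Suc 0) = [:0, 1:]"
| "cheb (Suc (Suc n)) = pCons 0 (smult 2 (cheb (Suc n))) - cheb n"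

lemma cheb_cos: "poly (cheb n) (cos t) = cos (real n * t)"
proof (induction n rule: cheb.induct)
  case (3 n)
  have "cos (real (Suc (Suc n)) * t) = 2 * cos t * cos (real (Suc n) * t) - cos (real n * t)"
  proof -
    have "cos t * cos (real (Suc n) * t) = (cos (t - real (Suc n) * t) + cos (t + real (Suc n) * t)) / 2"
      by (rule cos_times_cos)
    moreover have "t - real (Suc n) * t = - (real n * t)" by (simp add: algebra_simps)
    moreover have "t + real (Suc n) * t = real (Suc (Suc n)) * t" by (simp add: algebra_simps)
    ultimately show ?thesis by simp
  qed
  then show ?case using 3 by simp
qed auto

lemma cheb_w:
  assumes "w \<noteq> 0"
  shows "poly (cheb n) ((w + 1/w) / 2) = (w ^ n + (1/w) ^ n) / 2"
proof (induction n rule: cheb.induct)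
  case (3 n)
  define y where "y = (w + 1/w) / 2"
  have "poly (cheb (Suc (Suc n))) y = 2 * y * poly (cheb (Suc n)) y - poly (cheb n) y"
    by simp
  also have "\<dots> = 2 * y * ((w ^ Suc n + (1/w) ^ Suc n) / 2) - (w ^ n + (1/w) ^ n) / 2"
    unfolding y_def 3(1)[symmetric] 3(2)[symmetric] by (rule refl)
  also have "\<dots> = (w ^ Suc (Suc n) + (1/w) ^ Suc (Suc n)) / 2"
    using assms unfolding y_def by (simp add: field_simps power_Suc)
  finally show ?case by (simp add: y_def)
qed auto

lemma cheb_neg: "poly (cheb n) (- y) = (-1) ^ n * poly (cheb n) y"
  by (induction n rule: cheb.induct) (auto simp: algebra_simps)

lemma cheb_deg: "degree (cheb n) \<le> n \<and> coeff (cheb n) n = (if n = 0 then 1 else 2 ^ (n - 1))"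
proof (induction n rule: cheb.induct)
  case (3 n)
  have d: "degree (cheb (Suc (Suc n))) \<le> Suc (Suc n)"
    using 3 by (auto intro!: degree_diff_le le_trans[OF degree_pCons_le] simp: degree_smult_eq)
  have "coeff (cheb n) (Suc (Suc n)) = 0"
    using 3 by (intro coeff_eq_0) auto
  then have "coeff (cheb (Suc (Suc n))) (Suc (Suc n)) = 2 ^ Suc n"
    using 3 by (auto simp: power_Suc)
  then show ?case using d by simp
qed auto

lemma degree_cheb: "degree (cheb n) = n"
proof -
  have "coeff (cheb n) n \<noteq> 0" using cheb_deg[of n] by auto
  then have "n \<le> degree (cheb n)" by (rule le_degree)
  then show ?thesis using cheb_deg[of n] by simp
qed


lemma cheb_one: "poly (cheb n) 1 = 1"
  using cheb_cos[of n 0] by simp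

lemma cheb_abs_le1:
  assumes "\<bar>y\<bar> \<le> 1"
  shows "\<bar>poly (cheb n) y\<bar> \<le> 1"
proof -
  have "y = cos (arccos y)" using assms by (simp add: cos_arccos_abs)
  then have "poly (cheb n) y = cos (real n * arccos y)" by (metis cheb_cos)
  then show ?thesis by simp
qed

lemma cheb_even:
  assumes "even n"
  shows "poly (cheb n) (- y) = poly (cheb n) y"
  using assms by (simp add: cheb_neg)

lemma wrep:
  fixes y :: real
  assumes "1 \<le> y"
  defines "w \<equiv> y + sqrt (y\<^sup>2 - 1)"
  shows "1 \<le> w" "(w + 1/w) / 2 = y"
proof -
  have s0: "0 \<le> sqrt (y\<^sup>2 - 1)" using assms by simp
  then show "1 \<le> w" using assms(1) unfolding w_def by linarith
  have sq: "(sqrt (y\<^sup>2 - 1))\<^sup>2 = y\<^sup>2 - 1" using assms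
    by (simp add: one_le_power)
  have "w * (y - sqrt (y\<^sup>2 - 1)) = 1"
    unfolding w_def using sq by (simp add: algebra_simps power2_eq_square)
  moreover have "w \<noteq> 0" using \<open>1 \<le> w\<close> by simp
  ultimately have "1 / w = y - sqrt (y\<^sup>2 - 1)" by (simp add: field_simps)
  then show "(w + 1/w) / 2 = y" unfolding w_def by simp
qed

lemma cheb_ge1_rep:
  fixes y :: real
  assumes "1 \<le> y"
  shows "poly (cheb n) y = ((y + sqrt (y\<^sup>2 - 1)) ^ n + (1 / (y + sqrt (y\<^sup>2 - 1))) ^ n) / 2"
proof -
  let ?w = "y + sqrt (y\<^sup>2 - 1)"
  have "1 \<le> ?w" "(?w + 1/?w)/2 = y" using wrep[OF assms] by auto
  then show ?thesis using cheb_w[of ?w n] by (simp only:)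
qed

lemma g_mono:
  fixes v V :: real
  assumes "1 \<le> v" "v \<le> V"
  shows "v + 1/v \<le> V + 1/V"
proof -
  have "V + 1/V - (v + 1/v) = (V - v) * (1 - 1/(v*V))"
    using assms by (simp add: field_simps)
  moreover have "1 \<le> v * V" using mult_mono[of 1 v 1 V] assms by simp
  then have "1/(v*V) \<le> 1" by simp
  ultimately show ?thesis using assms by (smt (verit) mult_nonneg_nonneg)
qed

lemma cheb_mono:
  fixes y y' :: real
  assumes "1 \<le> y" "y \<le> y'"
  shows "poly (cheb n) y \<le> poly (cheb n) y'"
proof -
  let ?w = "y + sqrt (y\<^sup>2 - 1)" and ?w' = "y' + sqrt (y'\<^sup>2 - 1)"
  have w1: "1 \<le> ?w" using wrep[OF assms(1)] by auto
  have "y\<^sup>2 \<le> y'\<^sup>2" using assms by (intro power_mono) auto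
  then have "?w \<le> ?w'" using assms by (intro add_mono) auto
  then have le: "?w ^ n \<le> ?w' ^ n" using w1 by (intro power_mono) auto
  have "1 \<le> ?w ^ n" using w1 by (simp add: one_le_power)
  then have "?w ^ n + 1 / ?w ^ n \<le> ?w' ^ n + 1 / ?w' ^ n" using le by (rule g_mono)
  moreover have "poly (cheb n) y = (?w ^ n + 1 / ?w ^ n) / 2"
    using cheb_ge1_rep[of y n] assms by (simp add: power_one_over)
  moreover have "poly (cheb n) y' = (?w' ^ n + 1 / ?w' ^ n) / 2"
    using cheb_ge1_rep[of y' n] assms by (simp add: power_one_over)
  ultimately show ?thesis by (metis (no_types) divide_right_mono zero_le_numeral)
qed

lemma cheb_ge_one:
  assumes "1 \<le> (y::real)"
  shows "1 \<le> poly (cheb n) y"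
  using cheb_mono[OF _ assms, of n] cheb_one by simp

lemma cheb_ratio:
  fixes a y z s :: real and n :: nat
  assumes "1 \<le> y" "y \<le> a" "z = a + sqrt (a\<^sup>2 - 1)" "1 + s \<le> z" "z \<le> 4" "s > 0"
    "a - y \<le> 2 / (real n)\<^sup>2" "real n * s \<ge> 1/2" "n > 0"
  shows "exp (-32) / 2 * poly (cheb n) a \<le> poly (cheb n) y"
proof -
  define w where "w = y + sqrt (y\<^sup>2 - 1)"
  have w1: "1 \<le> w" and wy: "(w + 1/w)/2 = y" using wrep[OF assms(1)] unfolding w_def by auto
  have a1: "1 \<le> a" using assms by simp
  have za: "(z + 1/z)/2 = a" using wrep[OF a1] assms(3) by simp
  have "y\<^sup>2 \<le> a\<^sup>2" using assms by (intro power_mono) auto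
  then have wz: "w \<le> z" unfolding w_def assms(3) using assms by (intro add_mono) auto
  have z1: "1 < z" using assms by simp
  have Ty: "poly (cheb n) y = (w ^ n + (1/w) ^ n) / 2" using cheb_ge1_rep[OF assms(1)] w_def by simp
  have Ta: "poly (cheb n) a = (z ^ n + (1/z) ^ n) / 2" using cheb_ge1_rep[OF a1] assms(3) by simp
  have "0 \<le> (1/w) ^ n" using w1 by simp
  then have Ty2: "w ^ n / 2 \<le> poly (cheb n) y" unfolding Ty by simp
  have "(1/z) ^ n \<le> 1" using z1 by (simp add: power_le_one)
  moreover have "1 \<le> z ^ n" using z1 by (simp add: one_le_power)
  ultimately have Ta2: "poly (cheb n) a \<le> z ^ n" unfolding Ta by simp
  define r where "r = (z - w) / w"
  have zr: "z = w * (1 + r)" unfolding r_def using w1 by (simp add: field_simps)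
  have "a - y = (z + 1/z)/2 - (w + 1/w)/2" using za wy by simp
  also have "\<dots> = (z - w) * (z * w - 1) / (2 * z * w)"
    using w1 z1 by (simp add: field_simps)
  finally have ay: "a - y = (z - w) * (z * w - 1) / (2 * z * w)" .
  have zw1: "z - 1 \<le> z * w - 1" using w1 z1 by (simp add: mult_le_cancel_left1)
  have zwpos: "z * w - 1 > 0" using zw1 z1 by linarith
  have e: "2 * (a - y) * z = (z - w) * (z * w - 1) / w"
    unfolding ay using w1 z1 by (simp add: field_simps)
  have r_eq: "r = 2 * (a - y) * z / (z * w - 1)"
    unfolding e r_def using zwpos by simp
  have ay0: "0 \<le> a - y" using assms by simp
  have "r \<le> 2 * (a - y) * z / (z - 1)"
    unfolding r_eq using ay0 z1 zw1 zwpos by (intro divide_left_mono) (auto intro!: mult_pos_pos)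
  also have "\<dots> \<le> 2 * (2 / (real n)\<^sup>2) * 4 / s"
  proof (rule frac_le)
    have "2 * (a - y) \<le> 2 * (2 / (real n)\<^sup>2)" using assms by simp
    then show "2 * (a - y) * z \<le> 2 * (2 / (real n)\<^sup>2) * 4"
      using assms ay0 z1 by (intro mult_mono) auto
  qed (use assms z1 in auto)
  finally have r_le: "r \<le> 16 / ((real n)\<^sup>2 * s)" by simp
  have "real n * r \<le> real n * (16 / ((real n)\<^sup>2 * s))"
    using r_le assms(9) by (intro mult_left_mono) auto
  also have "\<dots> = 16 / (real n * s)" using assms(9) by (simp add: power2_eq_square)
  also have "\<dots> \<le> 32" using assms(6,8,9) by (simp add: field_simps)
  finally have nr: "real n * r \<le> 32" .
  have r0: "0 \<le> r" unfolding r_def using wz w1 by simp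
  have "(1 + r) ^ n \<le> exp r ^ n"
    using r0 by (intro power_mono) (auto simp: exp_ge_add_one_self)
  also have "\<dots> = exp (real n * r)" by (simp add: exp_of_nat_mult)
  also have "\<dots> \<le> exp 32" using nr by simp
  finally have "(1 + r) ^ n \<le> exp 32" .
  then have zz: "z ^ n \<le> w ^ n * exp 32" unfolding zr power_mult_distrib
    using w1 by (intro mult_left_mono) auto
  have "poly (cheb n) a \<le> z ^ n" by (rule Ta2)
  also have "\<dots> \<le> w ^ n * exp 32" by (rule zz)
  also have "\<dots> \<le> (2 * poly (cheb n) y) * exp 32"
    using Ty2 by (intro mult_right_mono) auto
  also have "\<dots> = 2 * exp 32 * poly (cheb n) y" by simp
  finally have "poly (cheb n) a \<le> 2 * exp 32 * poly (cheb n) y" .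
  then show ?thesis by (simp add: exp_minus field_simps)
qed

lemma fixed_n:
  fixes n :: nat and \<beta> :: real
  assumes ev: "even n" and npos: "n > 0" and b0: "0 < \<beta>" and b1: "\<beta> \<le> 1"
    and nb: "real n powr \<beta> \<ge> 8" and big: "exp (real n powr (\<beta>/2) / 4) \<ge> 2 * real n ^ 6"
  shows "\<exists>P :: real poly. degree P = n \<and>
       (\<forall>x. \<bar>x\<bar> \<le> 1 \<longrightarrow> \<bar>poly P x\<bar> \<le> 1) \<and> poly P 1 = 1 \<and> poly P (-1) = 1 \<and>
       (\<forall>x. \<bar>x\<bar> \<le> 1 - real n powr (\<beta> - 2) \<longrightarrow> \<bar>poly P x\<bar> \<le> real n powr (-6)) \<and>
       (\<forall>x. 1 - real n powr (-2) \<le> \<bar>x\<bar> \<and> \<bar>x\<bar> \<le> 1 \<longrightarrow> poly P x \<ge> exp (-32) / 2)"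
proof -
  have n1: "1 \<le> real n" using npos by simp
  have n2: "2 \<le> real n" using ev npos by (cases "n = 1") auto
  define L where "L = real n powr (\<beta>/2 - 1)"
  have L0: "0 < L" unfolding L_def using npos by simp
  have L1: "L \<le> 1" unfolding L_def using powr_mono[of "\<beta>/2 - 1" 0 "real n"] n1 b1 by simp
  have LL: "L\<^sup>2 = real n powr (\<beta> - 2)"
    unfolding L_def power2_eq_square by (subst powr_add[symmetric]) simp
  have nL: "real n * L = real n powr (\<beta>/2)"
    unfolding L_def using npos by (simp add: powr_mult_base)
  have nLge: "1 \<le> real n * L" unfolding nL using n1 b0 by (simp add: ge_one_powr_ge_zero)
  have nm2: "real n powr (-2) = 1 / (real n)\<^sup>2" using npos by (simp add: powr_neg_numeral)
  have nm6: "real n powr (-6) = 1 / real n ^ 6" using npos by (simp add: powr_neg_numeral)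
  have "(real n)\<^sup>2 = real n powr 2" using npos by (simp add: powr_numeral)
  then have Ln2: "L\<^sup>2 * (real n)\<^sup>2 = real n powr \<beta>"
    unfolding LL by (simp only:) (subst powr_add[symmetric], simp)
  define \<epsilon> where "\<epsilon> = L\<^sup>2 / 4"
  define a where "a = 1 + \<epsilon>"
  have e0: "0 < \<epsilon>" unfolding \<epsilon>_def using L0 by simp
  have e1: "\<epsilon> \<le> 1/4" unfolding \<epsilon>_def using L0 L1 by (simp add: power_le_one)
  have a1: "1 \<le> a" and a2: "a \<le> 2" unfolding a_def using e0 e1 by auto
  define z where "z = a + sqrt (a\<^sup>2 - 1)"
  have "(L/2)\<^sup>2 \<le> a\<^sup>2 - 1"
    unfolding a_def \<epsilon>_def using L0 by (simp add: power2_eq_square field_simps)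
  then have sq1: "L/2 \<le> sqrt (a\<^sup>2 - 1)" by (rule real_le_rsqrt)
  have z1: "1 + L/2 \<le> z" unfolding z_def using sq1 a1 by simp
  have "sqrt (a\<^sup>2 - 1) \<le> sqrt (a\<^sup>2)" by (intro real_sqrt_le_mono) simp
  then have z4: "z \<le> 4" unfolding z_def using a1 a2 by simp
  define T where "T = poly (cheb n)"
  have Ta_rep: "T a = (z ^ n + (1/z) ^ n) / 2" unfolding T_def z_def by (rule cheb_ge1_rep[OF a1])
  have zpos: "0 < z" using z1 L0 by simp
  have Ta_ge: "z ^ n / 2 \<le> T a" unfolding Ta_rep using zpos by simp
  have "L/2 - (L/2)\<^sup>2 \<le> ln (1 + L/2)" using L0 L1 by (intro ln_one_plus_pos_lower_bound) auto
  moreover have "L/4 \<le> L/2 - (L/2)\<^sup>2" using L0 L1 by (simp add: power2_eq_square field_simps)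
  ultimately have lnb: "L/4 \<le> ln (1 + L/2)" by simp
  have "exp (real n powr (\<beta>/2) / 4) = exp (real n * (L/4))" unfolding nL[symmetric] by simp
  also have "\<dots> \<le> exp (real n * ln (1 + L/2))" using lnb n1 by (simp add: mult_left_mono)
  also have "\<dots> = (1 + L/2) ^ n" using L0 by (simp add: exp_of_nat_mult)
  also have "\<dots> \<le> z ^ n" using z1 L0 by (intro power_mono) auto
  finally have "2 * real n ^ 6 \<le> z ^ n" using big by simp
  then have Ta_big: "real n ^ 6 \<le> T a" using Ta_ge by simp
  have Ta_pos: "0 < T a" using Ta_big npos by (smt (verit) of_nat_0_less_iff zero_less_power)
  define P where "P = smult (1 / T a) (pcompose (cheb n) [:0, a:])"
  have polyP: "poly P x = T (a * x) / T a" for x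
    unfolding P_def T_def by (simp add: poly_pcompose mult.commute)
  have degP: "degree P = n"
    unfolding P_def using Ta_pos a1 by (simp add: degree_pcompose degree_cheb)
  have Teven: "T (- y) = T y" for y unfolding T_def using ev by (rule cheb_even)
  have Tabs: "T y = T \<bar>y\<bar>" for y using Teven[of y] by (cases "y \<ge> 0") auto
  have Tbound: "\<bar>T y\<bar> \<le> T a" if "\<bar>y\<bar> \<le> a" for y
  proof (cases "\<bar>y\<bar> \<le> 1")
    case True
    then have "\<bar>T y\<bar> \<le> 1" unfolding T_def by (rule cheb_abs_le1)
    moreover have "1 \<le> T a" unfolding T_def using a1 by (rule cheb_ge_one)
    ultimately show ?thesis by simp
  next
    case False
    then have "1 \<le> \<bar>y\<bar>" by simp
    then have "1 \<le> T \<bar>y\<bar>" "T \<bar>y\<bar> \<le> T a" unfolding T_def using that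
      by (auto intro: cheb_ge_one cheb_mono)
    then show ?thesis using Tabs[of y] by simp
  qed
  have c1: "\<forall>x. \<bar>x\<bar> \<le> 1 \<longrightarrow> \<bar>poly P x\<bar> \<le> 1"
  proof (intro allI impI)
    fix x :: real assume "\<bar>x\<bar> \<le> 1"
    then have "\<bar>a * x\<bar> \<le> a" using a1 by (simp add: abs_mult mult_left_le)
    then have "\<bar>T (a * x)\<bar> \<le> T a" by (rule Tbound)
    then show "\<bar>poly P x\<bar> \<le> 1" unfolding polyP using Ta_pos by simp
  qed
  have c2: "poly P 1 = 1" unfolding polyP using Ta_pos by simp
  have c3: "poly P (-1) = 1" unfolding polyP using Ta_pos Teven[of a] by simp
  have c4: "\<forall>x. \<bar>x\<bar> \<le> 1 - real n powr (\<beta> - 2) \<longrightarrow> \<bar>poly P x\<bar> \<le> real n powr (-6)"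
  proof (intro allI impI)
    fix x :: real assume hx: "\<bar>x\<bar> \<le> 1 - real n powr (\<beta> - 2)"
    then have hx': "\<bar>x\<bar> \<le> 1 - L\<^sup>2" unfolding LL .
    have "\<bar>a * x\<bar> = a * \<bar>x\<bar>" using a1 by (simp add: abs_mult)
    also have "\<dots> \<le> a * (1 - L\<^sup>2)" using hx' a1 by (simp add: mult_left_mono)
    also have "\<dots> \<le> 1" unfolding a_def \<epsilon>_def using L0
      by (simp add: algebra_simps power2_eq_square)
    finally have "\<bar>T (a * x)\<bar> \<le> 1" unfolding T_def by (rule cheb_abs_le1)
    then have "\<bar>poly P x\<bar> \<le> 1 / T a" unfolding polyP using Ta_pos
      by (simp add: divide_right_mono)
    also have "\<dots> \<le> 1 / real n ^ 6" using Ta_big npos Ta_pos by (intro divide_left_mono) auto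
    finally show "\<bar>poly P x\<bar> \<le> real n powr (-6)" unfolding nm6 .
  qed
  have c5: "\<forall>x. 1 - real n powr (-2) \<le> \<bar>x\<bar> \<and> \<bar>x\<bar> \<le> 1 \<longrightarrow> poly P x \<ge> exp (-32) / 2"
  proof (intro allI impI)
    fix x :: real assume hx: "1 - real n powr (-2) \<le> \<bar>x\<bar> \<and> \<bar>x\<bar> \<le> 1"
    define m where "m = 1 / (real n)\<^sup>2"
    have hx1: "1 - m \<le> \<bar>x\<bar>" and hx2: "\<bar>x\<bar> \<le> 1" using hx unfolding nm2 m_def by auto
    have m0: "0 < m" unfolding m_def using npos by simp
    have "2\<^sup>2 \<le> (real n)\<^sup>2" using n2 by (intro power_mono) auto
    then have m4: "m \<le> 1/4" unfolding m_def using npos by (simp add: divide_le_eq)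
    have "8 * m \<le> L\<^sup>2" unfolding m_def using nb Ln2 npos by (simp add: field_simps)
    then have em: "2 * m \<le> \<epsilon>" unfolding \<epsilon>_def by simp
    define y where "y = a * \<bar>x\<bar>"
    have am: "a * (1 - m) = 1 + \<epsilon> - m - \<epsilon> * m" by (simp add: a_def algebra_simps)
    have "\<epsilon> * m \<le> \<epsilon> * (1/4)" using m4 e0 by (intro mult_left_mono) auto
    then have "1 \<le> a * (1 - m)" unfolding am using em m0 by linarith
    also have "\<dots> \<le> y" unfolding y_def using hx1 a1 by (simp add: mult_left_mono)
    finally have y1: "1 \<le> y" .
    have ya: "y \<le> a" unfolding y_def using hx2 a1 by (simp add: mult_left_le)
    have "a - y = a * (1 - \<bar>x\<bar>)" by (simp add: y_def algebra_simps)
    also have "\<dots> \<le> a * m" using hx1 a1 by (intro mult_left_mono) auto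
    finally have "a - y \<le> a * m" .
    also have "\<dots> \<le> 2 / (real n)\<^sup>2" unfolding m_def using a2 by (simp add: divide_right_mono)
    finally have ay: "a - y \<le> 2 / (real n)\<^sup>2" .
    have "exp (-32) / 2 * poly (cheb n) a \<le> poly (cheb n) y"
      by (rule cheb_ratio[OF y1 ya z_def _ z4 _ ay _ npos, of "L/2"])
        (use z1 L0 nLge in auto)
    then have "exp (-32) / 2 * T a \<le> T y" unfolding T_def .
    moreover have "T (a * x) = T y" unfolding y_def using Tabs[of "a * x"] a1
      by (simp add: abs_mult)
    ultimately show "poly P x \<ge> exp (-32) / 2" unfolding polyP using Ta_pos
      by (simp add: field_simps)
  qed
  show ?thesis using degP c1 c2 c3 c4 c5 by blast
qed

theorem lemma4p2:
  fixes \<alpha> :: real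
  assumes "\<alpha> > 0"
  shows "\<exists>c0::real. c0 > 0 \<and>
    infinite {n::nat. n > 0 \<and> (\<exists>P :: real poly. degree P = n \<and>
       (\<forall>x. \<bar>x\<bar> \<le> 1 \<longrightarrow> \<bar>poly P x\<bar> \<le> 1) \<and> poly P 1 = 1 \<and> poly P (-1) = 1 \<and>
       (\<forall>x. \<bar>x\<bar> \<le> 1 - real n powr (-(2 - \<alpha>)) \<longrightarrow> \<bar>poly P x\<bar> \<le> real n powr (-6)) \<and>
       (\<forall>x. 1 - real n powr (-2) \<le> \<bar>x\<bar> \<and> \<bar>x\<bar> \<le> 1 \<longrightarrow> poly P x \<ge> c0))}"
proof -
  define \<beta> where "\<beta> = min \<alpha> 1"
  have b0: "0 < \<beta>" and b1: "\<beta> \<le> 1" and ba: "\<beta> \<le> \<alpha>" using assms unfolding \<beta>_def by auto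
  have ev1: "eventually (\<lambda>n::nat. exp (real n powr (\<beta>/2) / 4) \<ge> 2 * real n ^ 6) sequentially"
    using b0 by real_asymp
  have ev2: "eventually (\<lambda>n::nat. real n powr \<beta> \<ge> 8) sequentially"
    using b0 by real_asymp
  obtain N where N: "\<And>n. n \<ge> N \<Longrightarrow> exp (real n powr (\<beta>/2) / 4) \<ge> 2 * real n ^ 6 \<and> real n powr \<beta> \<ge> 8"
    using eventually_conj[OF ev1 ev2] unfolding eventually_sequentially by blast
  show ?thesis
  proof (intro exI conjI)
    show "(exp (-32) / 2 :: real) > 0" by simp
    show "infinite {n::nat. n > 0 \<and> (\<exists>P :: real poly. degree P = n \<and>
       (\<forall>x. \<bar>x\<bar> \<le> 1 \<longrightarrow> \<bar>poly P x\<bar> \<le> 1) \<and> poly P 1 = 1 \<and> poly P (-1) = 1 \<and>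
       (\<forall>x. \<bar>x\<bar> \<le> 1 - real n powr (-(2 - \<alpha>)) \<longrightarrow> \<bar>poly P x\<bar> \<le> real n powr (-6)) \<and>
       (\<forall>x. 1 - real n powr (-2) \<le> \<bar>x\<bar> \<and> \<bar>x\<bar> \<le> 1 \<longrightarrow> poly P x \<ge> exp (-32) / 2))}"
      unfolding infinite_nat_iff_unbounded_le
    proof
      fix m :: nat
      define n where "n = 2 * (m + N + 1)"
      have nm: "n \<ge> m" and nN: "n \<ge> N" and ev: "even n" and npos: "n > 0" unfolding n_def by auto
      obtain P :: "real poly" where P: "degree P = n"
        "\<forall>x. \<bar>x\<bar> \<le> 1 \<longrightarrow> \<bar>poly P x\<bar> \<le> 1" "poly P 1 = 1" "poly P (-1) = 1"
        "\<forall>x. \<bar>x\<bar> \<le> 1 - real n powr (\<beta> - 2) \<longrightarrow> \<bar>poly P x\<bar> \<le> real n powr (-6)"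
        "\<forall>x. 1 - real n powr (-2) \<le> \<bar>x\<bar> \<and> \<bar>x\<bar> \<le> 1 \<longrightarrow> poly P x \<ge> exp (-32) / 2"
        using fixed_n[OF ev npos b0 b1] N[OF nN] by blast
      have \<delta>: "real n powr (\<beta> - 2) \<le> real n powr (-(2 - \<alpha>))"
        using npos ba by (intro powr_mono) auto
      have P5: "\<forall>x. \<bar>x\<bar> \<le> 1 - real n powr (-(2 - \<alpha>)) \<longrightarrow> \<bar>poly P x\<bar> \<le> real n powr (-6)"
      proof (intro allI impI)
        fix x :: real assume "\<bar>x\<bar> \<le> 1 - real n powr (-(2 - \<alpha>))"
        then have "\<bar>x\<bar> \<le> 1 - real n powr (\<beta> - 2)" using \<delta> by linarith
        then show "\<bar>poly P x\<bar> \<le> real n powr (-6)" using P(5) by blast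
      qed
      show "\<exists>n'\<ge>m. n' \<in> {n::nat. n > 0 \<and> (\<exists>P :: real poly. degree P = n \<and>
       (\<forall>x. \<bar>x\<bar> \<le> 1 \<longrightarrow> \<bar>poly P x\<bar> \<le> 1) \<and> poly P 1 = 1 \<and> poly P (-1) = 1 \<and>
       (\<forall>x. \<bar>x\<bar> \<le> 1 - real n powr (-(2 - \<alpha>)) \<longrightarrow> \<bar>poly P x\<bar> \<le> real n powr (-6)) \<and>
       (\<forall>x. 1 - real n powr (-2) \<le> \<bar>x\<bar> \<and> \<bar>x\<bar> \<le> 1 \<longrightarrow> poly P x \<ge> exp (-32) / 2))}"
        using nm npos P(1-4) P5 P(6) by blast
    qed
  qed
qed

end
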